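(* Let $B_k$ denote the number of minimal blocking sets of $\operatorname{PG}(2,q)$ of size $k$. Then for all integers $k$ with $q \leq k \leq 2q$, \[B_k \leq \frac{\binom{q^2 + q + 1}{2k - 2q}}{\binom{k}{2k-2q}}.\]
   Context: $q$ is a prime power and $\operatorname{PG}(2,q)$ is the incidence structure of the $q^2+q+1$ points and $q^2+q+1$ lines of $\mathbb{P}^2$ defined over $\mathbb{F}_q$. A blocking set is a set of points of $\operatorname{PG}(2,q)$ meeting every line of $\operatorname{PG}(2,q)$; it is minimal if no proper subset of it is a blocking set. *)

theory Defs
  imports Complex_Main "HOL-Library.Cardinality"
begin

text \<open>Vectors of F_q^3 are triples; a point is the set of nonzero scalar multiples
  of a nonzero vector (a 1-dimensional subspace minus 0); a line is the set of
  points orthogonal to a fixed nonzero vector (a 2-dimensional subspace).\<close>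

definition proj_pt :: "'a::field \<times> 'a \<times> 'a \<Rightarrow> ('a \<times> 'a \<times> 'a) set" where
  "proj_pt v = {(c * fst v, c * fst (snd v), c * snd (snd v)) | c. c \<noteq> 0}"

definition dot3 :: "'a::field \<times> 'a \<times> 'a \<Rightarrow> 'a \<times> 'a \<times> 'a \<Rightarrow> 'a" where
  "dot3 u v = fst u * fst v + fst (snd u) * fst (snd v) + snd (snd u) * snd (snd v)"

definition pg_points :: "('a::field \<times> 'a \<times> 'a) set set" where
  "pg_points = {proj_pt v | v. v \<noteq> (0, 0, 0)}"

definition pg_lines :: "('a::field \<times> 'a \<times> 'a) set set set" where
  "pg_lines = {{P \<in> pg_points. \<forall>v\<in>P. dot3 u v = 0} | u. u \<noteq> (0, 0, 0)}"

definition blocking_set :: "('a::field \<times> 'a \<times> 'a) set set \<Rightarrow> bool" where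
  "blocking_set B \<longleftrightarrow> B \<subseteq> pg_points \<and> (\<forall>L\<in>pg_lines. B \<inter> L \<noteq> {})"

definition minimal_blocking_set :: "('a::field \<times> 'a \<times> 'a) set set \<Rightarrow> bool" where
  "minimal_blocking_set B \<longleftrightarrow> blocking_set B \<and> (\<forall>B'. B' \<subset> B \<longrightarrow> \<not> blocking_set B')"

definition num_min_blocking :: "'a::field itself \<Rightarrow> nat \<Rightarrow> nat" where
  "num_min_blocking _ k =
     card {B :: ('a \<times> 'a \<times> 'a) set set. minimal_blocking_set B \<and> card B = k}"

end

theory Submission
  imports Defs "HOL-Computational_Algebra.Polynomial"
begin


lemma card_field_ge2: "2 \<le> CARD('a::{finite,field})"
proof -
  have "{0::'a, 1} \<subseteq> UNIV" by simp
  then have "card {0::'a,1} \<le> CARD('a)" by (intro card_mono) auto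
  then show ?thesis by simp
qed

lemma of_nat_card_field: "(of_nat CARD('a::{finite,field}) :: 'a) = 0"
proof -
  have "(\<Sum>u\<in>UNIV. (u::'a) + 1) = (\<Sum>u\<in>UNIV. u)"
    by (rule sum.reindex_bij_witness[where i="\<lambda>u. u - 1" and j="\<lambda>u. u + 1"]) auto
  then have "(\<Sum>u\<in>UNIV. (u::'a)) + (\<Sum>u\<in>(UNIV::'a set). 1) = (\<Sum>u\<in>UNIV. u)"
    by (simp add: sum.distrib)
  then show ?thesis by simp
qed

lemma exists_nonroot:
  assumes "1 \<le> i" "i < CARD('a::{finite,field}) - 1"
  shows "\<exists>c::'a. c \<noteq> 0 \<and> c ^ i \<noteq> 1"
proof (rule ccontr)
  assume "\<not> ?thesis"
  then have sub: "UNIV - {0} \<subseteq> {x::'a. poly (monom 1 i - 1) x = 0}"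
    by (auto simp: poly_monom)
  have deg: "degree (monom (1::'a) i - 1) \<le> i"
    by (intro degree_diff_le degree_monom_le) simp
  have "poly (monom (1::'a) i - 1) 0 \<noteq> 0"
    using assms by (simp add: poly_monom power_0_left)
  then have nz: "monom (1::'a) i - 1 \<noteq> 0"
    by auto
  have "card (UNIV - {0::'a}) \<le> card {x::'a. poly (monom 1 i - 1) x = 0}"
    by (rule card_mono[OF _ sub]) simp
  also have "\<dots> \<le> i" using card_poly_roots_bound[OF nz] deg by simp
  finally have "CARD('a) - 1 \<le> i" by (simp add: card_Diff_singleton)
  then show False using assms by simp
qed

lemma power_sum_zero:
  assumes "i < CARD('a::{finite,field}) - 1"
  shows "(\<Sum>u\<in>UNIV. (u::'a) ^ i) = 0"
proof (cases "i = 0")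
  case True
  then show ?thesis using of_nat_card_field[where 'a='a] by simp
next
  case False
  then obtain c :: 'a where c: "c \<noteq> 0" "c ^ i \<noteq> 1"
    using exists_nonroot[of i] assms by auto
  have "(\<Sum>u\<in>UNIV. (c * u) ^ i) = (\<Sum>u\<in>UNIV. (u::'a) ^ i)"
    by (rule sum.reindex_bij_witness[where i="\<lambda>u. u / c" and j="\<lambda>u. c * u"]) (use c in auto)
  then have "c ^ i * (\<Sum>u\<in>UNIV. u ^ i) = (\<Sum>u\<in>UNIV. (u::'a) ^ i)"
    by (simp add: power_mult_distrib sum_distrib_left)
  then have "(c ^ i - 1) * (\<Sum>u\<in>UNIV. u ^ i) = 0" by (simp add: algebra_simps)
  then show ?thesis using c by simp
qed

lemma sum_affine_prod:
  fixes \<alpha> \<beta> \<gamma> :: "'b \<Rightarrow> 'a::{finite,field}"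
  assumes "finite I"
  shows "card I + i + j \<le> 2 * CARD('a) - 3 \<Longrightarrow>
     (\<Sum>u\<in>UNIV. \<Sum>v\<in>UNIV. u ^ i * v ^ j * (\<Prod>k\<in>I. \<alpha> k * u + \<beta> k * v + \<gamma> k)) = 0"
  using assms
proof (induction I arbitrary: i j rule: finite_induct)
  case empty
  have q2: "2 \<le> CARD('a)" by (rule card_field_ge2)
  have "i < CARD('a) - 1 \<or> j < CARD('a) - 1" using empty q2 by linarith
  moreover have "(\<Sum>u\<in>UNIV. \<Sum>v\<in>UNIV. (u::'a) ^ i * v ^ j * 1) = (\<Sum>u\<in>UNIV. u ^ i) * (\<Sum>v\<in>UNIV. (v::'a) ^ j)"
    by (simp add: sum_product)
  ultimately show ?case using power_sum_zero by auto
next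
  case (insert x F)
  have e1: "(\<Sum>u\<in>UNIV. \<Sum>v\<in>UNIV. u ^ Suc i * v ^ j * (\<Prod>k\<in>F. \<alpha> k * u + \<beta> k * v + \<gamma> k)) = 0"
    using insert by (intro insert.IH) auto
  have e2: "(\<Sum>u\<in>UNIV. \<Sum>v\<in>UNIV. u ^ i * v ^ Suc j * (\<Prod>k\<in>F. \<alpha> k * u + \<beta> k * v + \<gamma> k)) = 0"
    using insert by (intro insert.IH) auto
  have e3: "(\<Sum>u\<in>UNIV. \<Sum>v\<in>UNIV. u ^ i * v ^ j * (\<Prod>k\<in>F. \<alpha> k * u + \<beta> k * v + \<gamma> k)) = 0"
    using insert by (intro insert.IH) auto
  let ?P = "\<lambda>u v. (\<Prod>k\<in>F. \<alpha> k * u + \<beta> k * v + \<gamma> k)"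
  have "(\<Sum>u\<in>UNIV. \<Sum>v\<in>UNIV. u ^ i * v ^ j * (\<Prod>k\<in>insert x F. \<alpha> k * u + \<beta> k * v + \<gamma> k))
     = (\<Sum>u\<in>UNIV. \<Sum>v\<in>UNIV. \<alpha> x * (u ^ Suc i * v ^ j * ?P u v) + \<beta> x * (u ^ i * v ^ Suc j * ?P u v)
           + \<gamma> x * (u ^ i * v ^ j * ?P u v))"
    using insert by (intro sum.cong refl) (simp add: algebra_simps)
  also have "\<dots> = \<alpha> x * (\<Sum>u\<in>UNIV. \<Sum>v\<in>UNIV. u ^ Suc i * v ^ j * ?P u v)
     + \<beta> x * (\<Sum>u\<in>UNIV. \<Sum>v\<in>UNIV. u ^ i * v ^ Suc j * ?P u v)
     + \<gamma> x * (\<Sum>u\<in>UNIV. \<Sum>v\<in>UNIV. u ^ i * v ^ j * ?P u v)"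
    by (simp add: sum.distrib sum_distrib_left)
  also have "\<dots> = 0" using e1 e2 e3 by simp
  finally show ?case .
qed



definition smul3 :: "'a::field \<Rightarrow> 'a \<times> 'a \<times> 'a \<Rightarrow> 'a \<times> 'a \<times> 'a" where
  "smul3 t v = (t * fst v, t * fst (snd v), t * snd (snd v))"
definition vadd3 :: "'a::field \<times> 'a \<times> 'a \<Rightarrow> 'a \<times> 'a \<times> 'a \<Rightarrow> 'a \<times> 'a \<times> 'a" where
  "vadd3 v w = (fst v + fst w, fst (snd v) + fst (snd w), snd (snd v) + snd (snd w))"
definition cross3 :: "'a::field \<times> 'a \<times> 'a \<Rightarrow> 'a \<times> 'a \<times> 'a \<Rightarrow> 'a \<times> 'a \<times> 'a" where
  "cross3 p q = (fst (snd p) * snd (snd q) - snd (snd p) * fst (snd q),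
                 snd (snd p) * fst q - fst p * snd (snd q),
                 fst p * fst (snd q) - fst (snd p) * fst q)"

lemma det_ident_raw:
  "smul3 (dot3 (cross3 (p1,p2,p3) (q1,q2,q3)) (r1,r2,r3)) (d1,d2,d3::'a::field) =
     vadd3 (smul3 (dot3 (d1,d2,d3) (p1,p2,p3)) (cross3 (q1,q2,q3) (r1,r2,r3))) (vadd3 (smul3 (dot3 (d1,d2,d3) (q1,q2,q3)) (cross3 (r1,r2,r3) (p1,p2,p3))) (smul3 (dot3 (d1,d2,d3) (r1,r2,r3)) (cross3 (p1,p2,p3) (q1,q2,q3))))"
  apply (simp add: smul3_def vadd3_def cross3_def dot3_def)
  apply (intro conjI)
  apply algebra+
  done

lemma det_ident:
  "smul3 (dot3 (cross3 p q) r) d =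
     vadd3 (smul3 (dot3 d p) (cross3 q r)) (vadd3 (smul3 (dot3 d q) (cross3 r p)) (smul3 (dot3 d r) (cross3 p q)))"
  using det_ident_raw by (metis prod_cases3)

lemma smul3_zero_iff: "smul3 t v = (0,0,0) \<longleftrightarrow> t = 0 \<or> v = (0,0,0)"
  by (cases v) (auto simp: smul3_def)

lemma dot3_smul3: "dot3 (smul3 t v) w = t * dot3 v w"
  by (simp add: smul3_def dot3_def algebra_simps)
lemma dot3_vadd3: "dot3 (vadd3 v w) x = dot3 v x + dot3 w x"
  by (simp add: vadd3_def dot3_def algebra_simps)
lemma dot3_zero: "dot3 (0,0,0) x = 0"
  by (simp add: dot3_def)

lemma proj_pt_smul: "proj_pt v = {smul3 c v | c. c \<noteq> 0}"
  by (simp add: proj_pt_def smul3_def)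

lemma proj_mem: "v \<in> proj_pt v"
  unfolding proj_pt_def by (rule CollectI, rule exI[of _ 1]) simp

lemma proj_dot:
  assumes "v \<noteq> (0,0,0)"
  shows "(\<forall>w\<in>proj_pt v. dot3 c w = 0) \<longleftrightarrow> dot3 c v = 0"
proof
  assume "\<forall>w\<in>proj_pt v. dot3 c w = 0" then show "dot3 c v = 0" using proj_mem by blast
next
  assume h: "dot3 c v = 0"
  show "\<forall>w\<in>proj_pt v. dot3 c w = 0"
  proof
    fix w assume "w \<in> proj_pt v"
    then obtain t where "w = smul3 t v" by (auto simp: proj_pt_smul)
    then have "dot3 c w = t * dot3 c v"
      by (simp add: smul3_def dot3_def algebra_simps)
    then show "dot3 c w = 0" using h by simp
  qed
qed

lemma proj_scale:
  assumes "t \<noteq> 0"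
  shows "proj_pt (smul3 t v) = proj_pt v"
proof -
  have "{smul3 c (smul3 t v) |c. c \<noteq> 0} = {smul3 c v |c. c \<noteq> 0}"
  proof (intro set_eqI iffI)
    fix x assume "x \<in> {smul3 c (smul3 t v) |c. c \<noteq> 0}"
    then obtain c where "c \<noteq> 0" "x = smul3 c (smul3 t v)" by auto
    then show "x \<in> {smul3 c v |c. c \<noteq> 0}" using assms
      by (intro CollectI exI[of _ "c * t"]) (simp add: smul3_def)
  next
    fix x assume "x \<in> {smul3 c v |c. c \<noteq> 0}"
    then obtain c where "c \<noteq> 0" "x = smul3 c v" by auto
    then show "x \<in> {smul3 c (smul3 t v) |c. c \<noteq> 0}" using assms
      by (intro CollectI exI[of _ "c / t"]) (simp add: smul3_def)
  qed
  then show ?thesis by (simp add: proj_pt_smul)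
qed

lemma cross_zero:
  assumes "p \<noteq> (0,0,0)" "q \<noteq> (0,0,0)" "cross3 p q = (0,0,0)"
  shows "proj_pt p = proj_pt q"
proof -
  obtain p1 p2 p3 where P: "p = (p1,p2,p3)" by (cases p)
  obtain q1 q2 q3 where Q: "q = (q1,q2,q3)" by (cases q)
  have c: "p2 * q3 = p3 * q2" "p3 * q1 = p1 * q3" "p1 * q2 = p2 * q1"
    using assms(3) by (auto simp: P Q cross3_def)
  have "\<exists>t. q = smul3 t p"
  proof (cases "p1 \<noteq> 0")
    case True
    show ?thesis
      by (rule exI[of _ "q1 / p1"]) (use True c in \<open>simp add: P Q smul3_def field_simps\<close>)
  next
    case F1: False
    show ?thesis
    proof (cases "p2 \<noteq> 0")
      case True
      show ?thesis
        by (rule exI[of _ "q2 / p2"]) (use True F1 c in \<open>simp add: P Q smul3_def field_simps\<close>)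
    next
      case False
      then have "p3 \<noteq> 0" using F1 assms(1) P by auto
      then show ?thesis using False F1 c
        by (intro exI[of _ "q3 / p3"]) (simp add: P Q smul3_def field_simps)
    qed
  qed
  then obtain t where t: "q = smul3 t p" by blast
  then have "t \<noteq> 0" using assms(2) by (auto simp: smul3_zero_iff)
  then show ?thesis using t proj_scale by metis
qed



lemma jamison:
  fixes Yv :: "('a::{finite,field} \<times> 'a \<times> 'a) set"
  assumes o: "w \<in> Yv" "dot3 e w = 0" "dot3 f w = 0"
    and nz: "\<forall>y\<in>Yv. dot3 u0 y \<noteq> 0"
    and cover: "\<And>a b. \<not> (a = 0 \<and> b = 0) \<Longrightarrow> \<exists>y\<in>Yv. dot3 u0 y + a * dot3 e y + b * dot3 f y = 0"
  shows "2 * CARD('a) - 1 \<le> card Yv"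
proof (rule ccontr)
  assume "\<not> ?thesis"
  then have cY: "card Yv \<le> 2 * CARD('a) - 2" by simp
  define I where "I = Yv - {w}"
  have cI: "card I \<le> 2 * CARD('a) - 3"
    using cY o(1) card_field_ge2[where 'a='a] by (simp add: I_def card_Diff_singleton)
  define F where "F = (\<lambda>u v. \<Prod>y\<in>I. dot3 e y * u + dot3 f y * v + dot3 u0 y)"
  have s0: "(\<Sum>u\<in>UNIV. \<Sum>v\<in>UNIV. u ^ 0 * v ^ 0 * F u v) = 0"
    unfolding F_def by (rule sum_affine_prod) (use cI in simp_all)
  have Fz: "F u v = (if u = 0 then (if v = 0 then F 0 0 else 0) else 0)" for u v
  proof (cases "u = 0 \<and> v = 0")
    case True then show ?thesis by simp
  next
    case False
    then obtain y where y: "y \<in> Yv" "dot3 u0 y + u * dot3 e y + v * dot3 f y = 0"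
      using cover by blast
    have "y \<noteq> w" using y o nz by auto
    then have "y \<in> I" using y by (simp add: I_def)
    moreover have "dot3 e y * u + dot3 f y * v + dot3 u0 y = 0" using y(2) by (simp add: algebra_simps)
    ultimately have "F u v = 0" unfolding F_def by (intro prod_zero) auto
    then show ?thesis using False by auto
  qed
  have "(\<Sum>u\<in>UNIV. \<Sum>v\<in>UNIV. u ^ 0 * v ^ 0 * F u v) = F 0 0"
  proof -
    have "(\<Sum>v\<in>UNIV. (if u = 0 then (if (v::'a) = 0 then F 0 0 else 0) else 0)) = (if u = 0 then F 0 0 else 0)" for u :: 'a
      by (cases "u = 0") (use sum.delta[of "UNIV::'a set" 0 "\<lambda>_. F 0 0"] in simp_all)
    then show ?thesis using sum.delta[of "UNIV::'a set" 0 "\<lambda>_. F 0 0"] by (subst Fz) simp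
  qed
  moreover have "F 0 0 \<noteq> 0" unfolding F_def using nz by (simp add: I_def)
  ultimately show False using s0 by simp
qed



definition rep :: "('a::field \<times> 'a \<times> 'a) set \<Rightarrow> 'a \<times> 'a \<times> 'a" where
  "rep P = (SOME v. v \<noteq> (0,0,0) \<and> P = proj_pt v)"

lemma rep: assumes "P \<in> pg_points" shows "rep P \<noteq> (0,0,0)" "P = proj_pt (rep P)"
proof -
  have "\<exists>v. v \<noteq> (0,0,0) \<and> P = proj_pt v" using assms by (auto simp: pg_points_def)
  then have "rep P \<noteq> (0,0,0) \<and> P = proj_pt (rep P)" unfolding rep_def by (rule someI_ex)
  then show "rep P \<noteq> (0,0,0)" "P = proj_pt (rep P)" by (rule conjunct1, rule conjunct2)
qed

lemma rep_inj: "inj_on rep pg_points"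
proof (rule inj_onI)
  fix P Q :: "('a \<times> 'a \<times> 'a) set"
  assume PQ: "P \<in> pg_points" "Q \<in> pg_points" and eq: "rep P = rep Q"
  have e1: "P = proj_pt (rep P)" by (rule rep(2)[OF PQ(1)])
  have e2: "Q = proj_pt (rep Q)" by (rule rep(2)[OF PQ(2)])
  have "P = proj_pt (rep P)" by (rule e1)
  also have "\<dots> = proj_pt (rep Q)" by (simp only: eq)
  also have "\<dots> = Q" by (rule e2[symmetric])
  finally show "P = Q" .
qed

lemma on_line: "P \<in> pg_points \<Longrightarrow> (\<forall>w\<in>P. dot3 c w = 0) \<longleftrightarrow> dot3 c (rep P) = 0"
proof -
  assume P: "P \<in> pg_points"
  have "(\<forall>w\<in>proj_pt (rep P). dot3 c w = 0) \<longleftrightarrow> dot3 c (rep P) = 0"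
    by (rule proj_dot[OF rep(1)[OF P]])
  moreover have "proj_pt (rep P) = P" by (rule sym, rule rep(2)[OF P])
  ultimately show ?thesis by simp
qed

lemma blocking_cover:
  assumes "blocking_set B" "c \<noteq> (0,0,0)"
  shows "\<exists>Q\<in>B. dot3 c (rep Q) = 0"
proof -
  have L: "{P\<in>pg_points. \<forall>v\<in>P. dot3 c v = 0} \<in> pg_lines"
    unfolding pg_lines_def by (intro CollectI exI[of _ c] conjI refl assms(2))
  have "B \<inter> {P\<in>pg_points. \<forall>v\<in>P. dot3 c v = 0} \<noteq> {}"
    using assms(1) L unfolding blocking_set_def by (elim conjE) (rule bspec)
  then obtain Q where "Q \<in> B" "Q \<in> pg_points" "\<forall>v\<in>Q. dot3 c v = 0"
    by auto
  then have "dot3 c (rep Q) = 0" using on_line[of Q c] by simp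
  then show ?thesis using \<open>Q \<in> B\<close> by blast
qed

lemma tangent:
  assumes "minimal_blocking_set B" "P \<in> B"
  shows "\<exists>u0. u0 \<noteq> (0,0,0) \<and> dot3 u0 (rep P) = 0 \<and> (\<forall>Q\<in>B-{P}. dot3 u0 (rep Q) \<noteq> 0)"
proof -
  have bs: "blocking_set B" and nb: "\<not> blocking_set (B - {P})"
    using assms unfolding minimal_blocking_set_def by auto
  have sub: "B \<subseteq> pg_points" using bs by (simp add: blocking_set_def)
  then have "B - {P} \<subseteq> pg_points" by auto
  then obtain L where L: "L \<in> pg_lines" "(B - {P}) \<inter> L = {}"
    using nb unfolding blocking_set_def by blast
  then obtain u0 where u0: "u0 \<noteq> (0,0,0)" "L = {P\<in>pg_points. \<forall>v\<in>P. dot3 u0 v = 0}"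
    unfolding pg_lines_def by blast
  have "B \<inter> L \<noteq> {}" using bs L(1) by (simp add: blocking_set_def)
  then have "P \<in> L" using L(2) by auto
  then have h1: "dot3 u0 (rep P) = 0" using u0(2) on_line[of P u0] by simp
  have h2: "\<forall>Q\<in>B-{P}. dot3 u0 (rep Q) \<noteq> 0"
  proof
    fix Q assume Q: "Q \<in> B - {P}"
    then have "Q \<notin> L" "Q \<in> pg_points" using L(2) sub by auto
    then show "dot3 u0 (rep Q) \<noteq> 0" using u0(2) on_line[of Q u0] by simp
  qed
  show ?thesis by (rule exI[of _ u0], intro conjI u0(1) h1 h2)
qed


lemma exists_nonorth:
  assumes "u \<noteq> (0::'a::field,0,0)"
  shows "\<exists>w. dot3 u w \<noteq> 0"
proof -
  obtain a b c where u: "u = (a,b,c)" by (cases u)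
  show ?thesis
  proof (cases "a \<noteq> 0")
    case True then show ?thesis by (intro exI[of _ "(1,0,0)"]) (simp add: u dot3_def)
  next
    case F: False
    show ?thesis
    proof (cases "b \<noteq> 0")
      case True then show ?thesis by (intro exI[of _ "(0,1,0)"]) (simp add: u dot3_def)
    next
      case False then have "c \<noteq> 0" using F assms u by auto
      then show ?thesis by (intro exI[of _ "(0,0,1)"]) (simp add: u dot3_def)
    qed
  qed
qed

lemma exists_ef:
  assumes "w \<noteq> (0::'a::field,0,0)"
  shows "\<exists>e f. dot3 e w = 0 \<and> dot3 f w = 0 \<and>
           (\<forall>a b. vadd3 (smul3 a e) (smul3 b f) = (0,0,0) \<longrightarrow> a = 0 \<and> b = 0)"
proof -
  obtain x y z where W: "w = (x,y,z)" by (cases w)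
  show ?thesis
  proof (cases "x \<noteq> 0")
    case True
    show ?thesis
      by (rule exI[of _ "(-y,x,0)"], rule exI[of _ "(-z,0,x)"])
         (use True in \<open>auto simp: W dot3_def vadd3_def smul3_def\<close>)
  next
    case F: False
    show ?thesis
    proof (cases "y \<noteq> 0")
      case True
      show ?thesis
        by (rule exI[of _ "(y,-x,0)"], rule exI[of _ "(0,-z,y)"])
           (use True in \<open>auto simp: W dot3_def vadd3_def smul3_def\<close>)
    next
      case False then have z: "z \<noteq> 0" using F assms W by auto
      show ?thesis
        by (rule exI[of _ "(z,0,-x)"], rule exI[of _ "(0,z,-y)"])
           (use z in \<open>auto simp: W dot3_def vadd3_def smul3_def\<close>)
    qed
  qed
qed



lemma cover_main:
  fixes B B' :: "('a::{finite,field} \<times> 'a \<times> 'a) set set"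
  assumes bB: "blocking_set B" and bB': "blocking_set B'"
    and PB: "P \<in> B" "P \<notin> B'"
    and u0P: "dot3 u0 (rep P) = 0"
    and Y: "Y = (B - {P}) \<union> {Q \<in> B' - B. dot3 u0 (rep Q) \<noteq> 0}"
    and w: "dot3 u0 w \<noteq> 0" "dot3 e w = 0" "dot3 f w = 0"
    and ind: "\<forall>a b. vadd3 (smul3 a e) (smul3 b f) = (0,0,0) \<longrightarrow> a = 0 \<and> b = 0"
    and ab: "\<not> (a = 0 \<and> b = 0)"
  shows "\<exists>y\<in>rep ` Y. dot3 u0 y + a * dot3 e y + b * dot3 f y = 0"
proof -
  define d where "d = vadd3 (smul3 a e) (smul3 b f)"
  define c where "c = vadd3 u0 d"
  have dotc: "dot3 c y = dot3 u0 y + a * dot3 e y + b * dot3 f y" for y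
    by (simp add: c_def d_def dot3_vadd3 dot3_smul3)
  have dotd: "dot3 d y = a * dot3 e y + b * dot3 f y" for y
    by (simp add: d_def dot3_vadd3 dot3_smul3)
  have dnz: "d \<noteq> (0,0,0)" using ind ab by (auto simp: d_def)
  have "dot3 c w \<noteq> 0" using w by (simp add: dotc)
  then have cnz: "c \<noteq> (0,0,0)" by (auto simp: dot3_zero)
  obtain Q where Q: "Q \<in> B'" "dot3 c (rep Q) = 0" using blocking_cover[OF bB' cnz] by blast
  obtain R where R: "R \<in> B" "dot3 c (rep R) = 0" using blocking_cover[OF bB cnz] by blast
  show ?thesis
  proof (cases "Q \<in> Y")
    case True then show ?thesis using Q(2) dotc by (metis image_eqI)
  next
    case QY: False
    show ?thesis
    proof (cases "R \<in> Y")
      case True then show ?thesis using R(2) dotc by (metis image_eqI)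
    next
      case False
      have RP: "R = P" using False R(1) Y by auto
      have QnB: "Q \<notin> B" using QY Q(1) PB Y by auto
      have Qu: "dot3 u0 (rep Q) = 0" using QY Q(1) QnB Y by auto
      have pts: "B \<subseteq> pg_points" "B' \<subseteq> pg_points" using bB bB' by (auto simp: blocking_set_def)
      define p where "p = rep P"
      define q where "q = rep Q"
      have Ppt: "P \<in> pg_points" "Q \<in> pg_points" using pts PB Q(1) by auto
      have pnz: "p \<noteq> (0,0,0)" "P = proj_pt p" unfolding p_def by (rule rep(1)[OF Ppt(1)], rule rep(2)[OF Ppt(1)])
      have qnz: "q \<noteq> (0,0,0)" "Q = proj_pt q" unfolding q_def by (rule rep(1)[OF Ppt(2)], rule rep(2)[OF Ppt(2)])
      have "P \<noteq> Q" using PB Q(1) by auto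
      then have cr: "cross3 p q \<noteq> (0,0,0)" using cross_zero[OF pnz(1) qnz(1)] pnz qnz by auto
      have dp: "dot3 d p = 0"
      proof -
        have "dot3 c p = 0" using R(2) RP by (simp add: p_def)
        then show ?thesis using u0P by (simp add: c_def dot3_vadd3 p_def)
      qed
      have dq: "dot3 d q = 0"
      proof -
        have "dot3 c q = 0" using Q(2) by (simp add: q_def)
        then show ?thesis using Qu by (simp add: c_def dot3_vadd3 q_def)
      qed
      have dw: "dot3 d w = 0" using w by (simp add: dotd)
      have "smul3 (dot3 (cross3 p q) w) u0 = smul3 (dot3 u0 w) (cross3 p q)"
        using det_ident[of p q w u0] u0P Qu
        by (simp add: p_def q_def smul3_def vadd3_def)
      moreover have "smul3 (dot3 u0 w) (cross3 p q) \<noteq> (0,0,0)"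
        using w(1) cr by (simp add: smul3_zero_iff)
      ultimately have det: "dot3 (cross3 p q) w \<noteq> 0" by (auto simp: smul3_def)
      have "smul3 (dot3 (cross3 p q) w) d = (0,0,0)"
        using det_ident[of p q w d] dp dq dw by (simp add: smul3_def vadd3_def)
      then have "d = (0,0,0)" using det by (simp add: smul3_zero_iff)
      then show ?thesis using dnz by simp
    qed
  qed
qed



lemma key:
  fixes B B' :: "('a::{finite,field} \<times> 'a \<times> 'a) set set"
  assumes mB: "minimal_blocking_set B" and bB': "blocking_set B'"
    and cd: "card B = card B'" and ne: "B \<noteq> B'"
  shows "2 * CARD('a) + 1 \<le> card B + card (B' - B)"
proof -
  have bB: "blocking_set B" using mB by (simp add: minimal_blocking_set_def)
  have pts: "B \<subseteq> pg_points" "B' \<subseteq> pg_points" using bB bB' by (auto simp: blocking_set_def)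
  obtain P where PB: "P \<in> B" "P \<notin> B'"
  proof (cases "B \<subseteq> B'")
    case True
    then have "B = B'" using cd by (intro card_subset_eq) auto
    then show ?thesis using ne by simp
  next
    case False then show ?thesis using that by blast
  qed
  obtain u0 where u0: "u0 \<noteq> (0,0,0)" "dot3 u0 (rep P) = 0" "\<forall>Q\<in>B-{P}. dot3 u0 (rep Q) \<noteq> 0"
    using tangent[OF mB PB(1)] by blast
  define Z where "Z = {Q \<in> B' - B. dot3 u0 (rep Q) \<noteq> 0}"
  define Y where "Y = (B - {P}) \<union> Z"
  have Ysub: "Y \<subseteq> pg_points" using pts by (auto simp: Y_def Z_def)
  have nz: "\<forall>y\<in>rep ` Y. dot3 u0 y \<noteq> 0" using u0(3) by (auto simp: Y_def Z_def)
  have Yeq: "Y = (B - {P}) \<union> {Q \<in> B' - B. dot3 u0 (rep Q) \<noteq> 0}" by (simp add: Y_def Z_def)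
  obtain w0 where w0: "dot3 u0 w0 \<noteq> 0" using exists_nonorth[OF u0(1)] by blast
  then have "w0 \<noteq> (0,0,0)" by (auto simp: dot3_def)
  then obtain e0 f0 where ef0: "dot3 e0 w0 = 0" "dot3 f0 w0 = 0"
     "\<forall>a b. vadd3 (smul3 a e0) (smul3 b f0) = (0,0,0) \<longrightarrow> a = 0 \<and> b = 0"
    using exists_ef by blast
  have "\<exists>y\<in>rep ` Y. dot3 u0 y + 1 * dot3 e0 y + 0 * dot3 f0 y = 0"
    by (rule cover_main[OF bB bB' PB u0(2) Yeq w0 ef0]) simp
  then obtain w where w: "w \<in> rep ` Y" by blast
  then have wu: "dot3 u0 w \<noteq> 0" using nz by blast
  then have "w \<noteq> (0,0,0)" by (auto simp: dot3_def)
  then obtain e f where ef: "dot3 e w = 0" "dot3 f w = 0"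
     "\<forall>a b. vadd3 (smul3 a e) (smul3 b f) = (0,0,0) \<longrightarrow> a = 0 \<and> b = 0"
    using exists_ef by blast
  have "2 * CARD('a) - 1 \<le> card (rep ` Y)"
  proof (rule jamison[OF w ef(1,2) nz])
    fix a b :: 'a assume "\<not> (a = 0 \<and> b = 0)"
    then show "\<exists>y\<in>rep ` Y. dot3 u0 y + a * dot3 e y + b * dot3 f y = 0"
      by (rule cover_main[OF bB bB' PB u0(2) Yeq wu ef])
  qed
  moreover have "card (rep ` Y) = card Y"
    using inj_on_subset[OF rep_inj Ysub] by (rule card_image)
  moreover have "card Y \<le> card (B - {P}) + card Z" unfolding Y_def by (rule card_Un_le)
  moreover have "card (B - {P}) = card B - 1" using PB by simp
  moreover have "card Z < card (B' - B)"
  proof (rule psubset_card_mono)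
    show "finite (B' - B)" by simp
    obtain Q0 where Q0: "Q0 \<in> B'" "dot3 u0 (rep Q0) = 0" using blocking_cover[OF bB' u0(1)] by blast
    have "Q0 \<notin> B" using Q0 u0(3) PB by auto
    then have "Q0 \<in> (B' - B) - Z" using Q0 by (simp add: Z_def)
    then show "Z \<subset> B' - B" by (auto simp: Z_def)
  qed
  moreover have "card B > 0" using PB by (auto simp: card_gt_0_iff)
  moreover have "2 \<le> CARD('a)" by (rule card_field_ge2)
  ultimately show ?thesis by linarith
qed



lemma card_pg_points: "card (pg_points :: ('a::{finite,field} \<times> 'a \<times> 'a) set set) = CARD('a)^2 + CARD('a) + 1"
proof -
  let ?q = "CARD('a)"
  let ?C = "pg_points :: ('a \<times> 'a \<times> 'a) set set"
  have U: "\<Union>?C = UNIV - {(0,0,0)}"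
  proof (intro set_eqI iffI)
    fix x assume "x \<in> \<Union>?C"
    then obtain v where v: "v \<noteq> (0,0,0)" "x \<in> proj_pt v" by (auto simp: pg_points_def)
    then obtain t where "t \<noteq> 0" "x = smul3 t v" by (auto simp: proj_pt_smul)
    then show "x \<in> UNIV - {(0,0,0)}" using v(1) by (auto simp: smul3_zero_iff)
  next
    fix x :: "'a \<times> 'a \<times> 'a" assume "x \<in> UNIV - {(0,0,0)}"
    then have "proj_pt x \<in> ?C" unfolding pg_points_def by (intro CollectI exI[of _ x] conjI refl) simp
    then show "x \<in> \<Union>?C" using proj_mem[of x] by blast
  qed
  have cardc: "\<forall>c\<in>?C. card c = ?q - 1"
  proof
    fix c assume "c \<in> ?C"
    then obtain v where v: "v \<noteq> (0,0,0)" "c = proj_pt v" by (auto simp: pg_points_def)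
    have img: "c = (\<lambda>t. smul3 t v) ` (UNIV - {0})" using v(2) by (auto simp: proj_pt_smul)
    have "inj_on (\<lambda>t. smul3 t v) (UNIV - {0})"
    proof (rule inj_onI)
      fix s t assume "smul3 s v = smul3 t v"
      then have "smul3 (s - t) v = (0,0,0)" by (simp add: smul3_def algebra_simps)
      then show "s = t" using v(1) by (simp add: smul3_zero_iff)
    qed
    then have "card c = card (UNIV - {0::'a})" using img by (simp add: card_image)
    then show "card c = ?q - 1" by (simp add: card_Diff_singleton)
  qed
  have disj: "\<forall>c1\<in>?C. \<forall>c2\<in>?C. c1 \<noteq> c2 \<longrightarrow> c1 \<inter> c2 = {}"
  proof (intro ballI impI)
    fix c1 c2 assume c: "c1 \<in> ?C" "c2 \<in> ?C" "c1 \<noteq> c2"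
    obtain v where v: "c1 = proj_pt v" using c(1) by (auto simp: pg_points_def)
    obtain w where w: "c2 = proj_pt w" using c(2) by (auto simp: pg_points_def)
    show "c1 \<inter> c2 = {}"
    proof (rule ccontr)
      assume "c1 \<inter> c2 \<noteq> {}"
      then obtain x where "x \<in> proj_pt v" "x \<in> proj_pt w" using v w by auto
      then obtain s t where "s \<noteq> 0" "x = smul3 s v" "t \<noteq> 0" "x = smul3 t w" by (auto simp: proj_pt_smul)
      then have "proj_pt x = proj_pt v" "proj_pt x = proj_pt w" using proj_scale[of s v] proj_scale[of t w] by simp_all
      then show False using c(3) v w by simp
    qed
  qed
  have "(?q - 1) * card ?C = card (\<Union>?C)"
    by (rule card_partition) (use cardc disj in auto)
  also have "\<dots> = ?q * (?q * ?q) - 1"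
    by (simp add: U card_Diff_singleton)
  finally have eq: "(?q - 1) * card ?C = ?q * (?q * ?q) - 1" .
  have q2: "2 \<le> ?q" by (rule card_field_ge2)
  define m where "m = ?q - 1"
  have m: "?q = m + 1" "m \<ge> 1" using q2 by (simp_all add: m_def)
  have "m * card ?C = m * (?q^2 + ?q + 1)"
    using eq unfolding m(1) by (simp add: algebra_simps power2_eq_square)
  then show ?thesis using m(2) by (subst (asm) mult_left_cancel) auto
qed

theorem theorem2:
  fixes k :: nat and F :: "'a::{finite,field} itself"
  assumes "CARD('a) \<le> k" and "k \<le> 2 * CARD('a)"
  shows "real (num_min_blocking F k)
           \<le> real ((CARD('a)^2 + CARD('a) + 1) choose (2*k - 2*CARD('a)))
              / real (k choose (2*k - 2*CARD('a)))"
proof -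
  let ?q = "CARD('a)"
  define m where "m = 2*k - 2*?q"
  define BB where "BB = {B :: ('a \<times> 'a \<times> 'a) set set. minimal_blocking_set B \<and> card B = k}"
  define S where "S = Sigma BB (\<lambda>B. {T. T \<subseteq> B \<and> card T = m})"
  have nb: "num_min_blocking F k = card BB" by (simp add: num_min_blocking_def BB_def)
  have "card S = (\<Sum>B\<in>BB. card {T. T \<subseteq> B \<and> card T = m})"
    unfolding S_def by (rule card_SigmaI) auto
  also have "\<dots> = (\<Sum>B\<in>BB. k choose m)"
    by (intro sum.cong refl) (simp add: n_subsets BB_def)
  also have "\<dots> = card BB * (k choose m)" by simp
  finally have cS: "card S = card BB * (k choose m)" .
  have inj: "inj_on snd S"
  proof (rule inj_onI)
    fix x y assume x: "x \<in> S" and y: "y \<in> S" and eq: "snd x = snd y"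
    obtain B T where xB: "x = (B, T)" by (cases x)
    obtain B' T' where yB: "y = (B', T')" by (cases y)
    have TT: "T = T'" using eq xB yB by simp
    have B: "minimal_blocking_set B" "card B = k" "T \<subseteq> B" "card T = m"
      using x xB by (auto simp: S_def BB_def)
    have B': "minimal_blocking_set B'" "card B' = k" "T \<subseteq> B'"
      using y yB TT by (auto simp: S_def BB_def)
    show "x = y"
    proof (rule ccontr)
      assume "x \<noteq> y"
      then have ne: "B \<noteq> B'" using xB yB TT by simp
      have "blocking_set B'" using B'(1) by (simp add: minimal_blocking_set_def)
      then have k1: "2 * ?q + 1 \<le> card B + card (B' - B)"
        using key[OF B(1) _ _ ne] B(2) B'(2) by simp
      have "card (B' - B) = card B' - card (B' \<inter> B)" by (rule card_Diff_subset_Int) simp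
      moreover have "card T \<le> card (B' \<inter> B)" using B(3) B'(3) by (intro card_mono) auto
      moreover have "card (B' \<inter> B) \<le> card B'" by (intro card_mono) auto
      ultimately show False using k1 B(2,4) B'(2) assms unfolding m_def by linarith
    qed
  qed
  have "snd ` S \<subseteq> {T. T \<subseteq> pg_points \<and> card T = m}"
  proof
    fix T assume "T \<in> snd ` S"
    then obtain B where "B \<in> BB" "T \<subseteq> B" "card T = m" by (auto simp: S_def)
    then show "T \<in> {T. T \<subseteq> pg_points \<and> card T = m}"
      by (auto simp: BB_def minimal_blocking_set_def blocking_set_def)
  qed
  then have "card (snd ` S) \<le> card {T. T \<subseteq> (pg_points :: ('a \<times> 'a \<times> 'a) set set) \<and> card T = m}"
    by (intro card_mono) auto
  also have "\<dots> = card (pg_points :: ('a \<times> 'a \<times> 'a) set set) choose m" by (rule n_subsets) simp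
  also have "\<dots> = (?q^2 + ?q + 1) choose m" by (simp add: card_pg_points)
  finally have le: "card BB * (k choose m) \<le> (?q^2 + ?q + 1) choose m"
    using card_image[OF inj] cS by simp
  have pos: "0 < k choose m" using assms unfolding m_def by (intro zero_less_binomial) linarith
  have "real (card BB) * real (k choose m) \<le> real ((?q^2 + ?q + 1) choose m)"
    using le by (metis of_nat_le_iff of_nat_mult)
  then have "real (card BB) \<le> real ((?q^2 + ?q + 1) choose m) / real (k choose m)"
    using pos by (simp add: pos_le_divide_eq)
  then show ?thesis by (simp add: nb m_def)
qed

end
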